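(* Every (unbounded-fanin) formula computing $\textsc{parity}_n(x)=x_1\oplus\cdots\oplus x_n$ has $\Omega(n^2)$ gates, and likewise every formula computing $\textsc{majority}_n$ (which is 1 iff more than half of the $n$ input bits are 1) has $\Omega(n^2)$ gates.
   Context: A formula on input variables $x_1,\dots,x_n$ is a rooted tree whose leaves are labeled by input variables (the same variable may label many leaves) and whose internal vertices are \textsc{not} gates (fanin 1) or unbounded-fanin \textsc{and}/\textsc{or} gates; its number of gates is the number of \textsc{and} and \textsc{or} gates. *)

theory Defs
  imports Complex_Main
begin

datatype formula = Var nat | Neg formula | AndG "formula list" | OrG "formula list"

fun eval :: "(nat \<Rightarrow> bool) \<Rightarrow> formula \<Rightarrow> bool" where
  "eval x (Var i) = x i"
| "eval x (Neg f) = (\<not> eval x f)"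
| "eval x (AndG fs) = (\<forall>f \<in> set fs. eval x f)"
| "eval x (OrG fs) = (\<exists>f \<in> set fs. eval x f)"

fun vars :: "formula \<Rightarrow> nat set" where
  "vars (Var i) = {i}"
| "vars (Neg f) = vars f"
| "vars (AndG fs) = (\<Union>f \<in> set fs. vars f)"
| "vars (OrG fs) = (\<Union>f \<in> set fs. vars f)"

fun gates :: "formula \<Rightarrow> nat" where
  "gates (Var i) = 0"
| "gates (Neg f) = gates f"
| "gates (AndG fs) = Suc (sum_list (map gates fs))"
| "gates (OrG fs) = Suc (sum_list (map gates fs))"

text \<open>Inputs x_1..x_n are represented by variable indices 0..n-1.\<close>
definition computes :: "nat \<Rightarrow> ((nat \<Rightarrow> bool) \<Rightarrow> bool) \<Rightarrow> formula \<Rightarrow> bool" where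
  "computes n g F \<longleftrightarrow> vars F \<subseteq> {..<n} \<and> (\<forall>x. eval x F = g x)"

definition parity :: "nat \<Rightarrow> (nat \<Rightarrow> bool) \<Rightarrow> bool" where
  "parity n x = odd (card {i. i < n \<and> x i})"

definition majority :: "nat \<Rightarrow> (nat \<Rightarrow> bool) \<Rightarrow> bool" where
  "majority n x = (2 * card {i. i < n \<and> x i} > n)"

end

theory Submission
  imports Defs
begin


fun isLit :: "formula \<Rightarrow> bool" where
  "isLit (Var i) = True" | "isLit (Neg f) = isLit f" | "isLit _ = False"
fun lvar :: "formula \<Rightarrow> nat" where
  "lvar (Var i) = i" | "lvar (Neg f) = lvar f" | "lvar _ = 0"
fun lpol :: "formula \<Rightarrow> bool" where
  "lpol (Var i) = True" | "lpol (Neg f) = (\<not> lpol f)" | "lpol _ = True"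

lemma eval_lit: "isLit f \<Longrightarrow> eval x f = (x (lvar f) = lpol f)"
  by (induction f) auto

lemma lvar_vars: "isLit f \<Longrightarrow> lvar f \<in> vars f"
  by (induction f) auto

fun rights :: "(bool + formula) list \<Rightarrow> formula list" where
  "rights [] = []" | "rights (Inl c # rs) = rights rs" | "rights (Inr g # rs) = g # rights rs"

definition orres :: "(bool + formula) list \<Rightarrow> bool + formula" where
  "orres rs = (if Inl True \<in> set rs then Inl True else if rights rs = [] then Inl False else Inr (OrG (rights rs)))"
definition andres :: "(bool + formula) list \<Rightarrow> bool + formula" where
  "andres rs = (if Inl False \<in> set rs then Inl False else if rights rs = [] then Inl True else Inr (AndG (rights rs)))"

fun restr :: "nat \<Rightarrow> bool \<Rightarrow> formula \<Rightarrow> bool + formula" where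
  "restr i v (Var j) = (if j = i then Inl v else Inr (Var j))"
| "restr i v (Neg f) = (case restr i v f of Inl c \<Rightarrow> Inl (\<not> c) | Inr g \<Rightarrow> Inr (Neg g))"
| "restr i v (OrG fs) = orres (map (restr i v) fs)"
| "restr i v (AndG fs) = andres (map (restr i v) fs)"

definition val :: "(nat \<Rightarrow> bool) \<Rightarrow> bool + formula \<Rightarrow> bool" where
  "val x r = (case r of Inl c \<Rightarrow> c | Inr g \<Rightarrow> eval x g)"

definition gsize :: "bool + formula \<Rightarrow> nat" where
  "gsize r = (case r of Inl c \<Rightarrow> 0 | Inr g \<Rightarrow> gates g)"

lemma rights_set: "g \<in> set (rights rs) \<longleftrightarrow> Inr g \<in> set rs"
  by (induction rs rule: rights.induct) auto

lemma rights_nil: "rights rs = [] \<longleftrightarrow> (\<forall>r \<in> set rs. \<exists>c. r = Inl c)"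
  by (induction rs rule: rights.induct) auto

lemma rights_sum: "sum_list (map gates (rights rs)) = sum_list (map gsize rs)"
  by (induction rs rule: rights.induct) (auto simp: gsize_def)

lemma restr_lit: "isLit f \<Longrightarrow> lvar f = i \<Longrightarrow> restr i v f = Inl (v = lpol f)"
  by (induction f) auto



lemma orres_val: "val x (orres rs) = (\<exists>r\<in>set rs. val x r)"
proof (cases "Inl True \<in> set rs")
  case True
  then show ?thesis unfolding orres_def by (force simp: val_def)
next
  case False
  show ?thesis
  proof (cases "rights rs = []")
    case True
    then have "\<forall>r\<in>set rs. \<exists>c. r = Inl c" by (simp add: rights_nil)
    then have "\<forall>r\<in>set rs. r = Inl False" using False by (metis (full_types))
    then have "\<not> (\<exists>r\<in>set rs. val x r)" by (auto simp: val_def)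
    then show ?thesis using False True unfolding orres_def by (simp add: val_def)
  next
    case nn: False
    have "val x (orres rs) = (\<exists>g\<in>set (rights rs). eval x g)"
      using False nn unfolding orres_def by (simp add: val_def)
    also have "\<dots> = (\<exists>r\<in>set rs. val x r)"
    proof
      assume "\<exists>g\<in>set (rights rs). eval x g"
      then obtain g where "Inr g \<in> set rs" "eval x g" by (auto simp: rights_set)
      then show "\<exists>r\<in>set rs. val x r" by (force simp: val_def)
    next
      assume "\<exists>r\<in>set rs. val x r"
      then obtain r where r: "r \<in> set rs" "val x r" by blast
      show "\<exists>g\<in>set (rights rs). eval x g"
      proof (cases r)
        case (Inl c)
        then have "c" using r by (simp add: val_def)
        then have "r = Inl True" using Inl by simp
        then show ?thesis using False r by blast
      next
        case (Inr g)
        then show ?thesis using r by (auto simp: rights_set val_def)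
      qed
    qed
    finally show ?thesis .
  qed
qed

lemma andres_val: "val x (andres rs) = (\<forall>r\<in>set rs. val x r)"
proof (cases "Inl False \<in> set rs")
  case True
  then show ?thesis unfolding andres_def by (force simp: val_def)
next
  case False
  show ?thesis
  proof (cases "rights rs = []")
    case True
    then have "\<forall>r\<in>set rs. \<exists>c. r = Inl c" by (simp add: rights_nil)
    then have "\<forall>r\<in>set rs. r = Inl True" using False by (metis (full_types))
    then have "(\<forall>r\<in>set rs. val x r)" by (auto simp: val_def)
    then show ?thesis using False True unfolding andres_def by (simp add: val_def)
  next
    case nn: False
    have "val x (andres rs) = (\<forall>g\<in>set (rights rs). eval x g)"
      using False nn unfolding andres_def by (simp add: val_def)
    also have "\<dots> = (\<forall>r\<in>set rs. val x r)"
    proof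
      assume a: "\<forall>g\<in>set (rights rs). eval x g"
      show "\<forall>r\<in>set rs. val x r"
      proof
        fix r assume r: "r \<in> set rs"
        show "val x r"
        proof (cases r)
          case (Inl c)
          then have "c" using r False by (cases c) auto
          then show ?thesis using Inl by (simp add: val_def)
        next
          case (Inr g)
          then show ?thesis using r a by (auto simp: rights_set val_def)
        qed
      qed
    next
      assume "\<forall>r\<in>set rs. val x r"
      then show "\<forall>g\<in>set (rights rs). eval x g" by (force simp: rights_set val_def)
    qed
    finally show ?thesis .
  qed
qed

lemma restr_eval: "val x (restr i v F) = eval (x(i:=v)) F"
proof (induction F)
  case (Var j) then show ?case by (auto simp: val_def)
next
  case (Neg f) then show ?case by (auto simp: val_def split: sum.splits)
next
  case (OrG fs)
  have "val x (restr i v (OrG fs)) = (\<exists>f\<in>set fs. val x (restr i v f))"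
    by (simp add: orres_val)
  also have "\<dots> = (\<exists>f\<in>set fs. eval (x(i:=v)) f)" using OrG.IH by (auto simp del: fun_upd_apply)
  finally show ?case by (simp del: fun_upd_apply)
next
  case (AndG fs)
  have "val x (restr i v (AndG fs)) = (\<forall>f\<in>set fs. val x (restr i v f))"
    by (simp add: andres_val)
  also have "\<dots> = (\<forall>f\<in>set fs. eval (x(i:=v)) f)" using AndG.IH by (auto simp del: fun_upd_apply)
  finally show ?case by (simp del: fun_upd_apply)
qed


lemma restr_vars: "restr i v F = Inr g \<Longrightarrow> vars g \<subseteq> vars F - {i}"
proof (induction F arbitrary: g)
  case (Var j) then show ?case by (auto split: if_splits)
next
  case (Neg f) then show ?case by (auto split: sum.splits)
next
  case (OrG fs)
  then have g: "g = OrG (rights (map (restr i v) fs))" by (auto simp: orres_def split: if_splits)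
  show ?case
  proof
    fix k assume "k \<in> vars g"
    then obtain h where h: "h \<in> set (rights (map (restr i v) fs))" "k \<in> vars h" using g by auto
    then obtain f where "f \<in> set fs" "restr i v f = Inr h" by (auto simp: rights_set)
    then show "k \<in> vars (OrG fs) - {i}" using OrG.IH h by auto
  qed
next
  case (AndG fs)
  then have g: "g = AndG (rights (map (restr i v) fs))" by (auto simp: andres_def split: if_splits)
  show ?case
  proof
    fix k assume "k \<in> vars g"
    then obtain h where h: "h \<in> set (rights (map (restr i v) fs))" "k \<in> vars h" using g by auto
    then obtain f where "f \<in> set fs" "restr i v f = Inr h" by (auto simp: rights_set)
    then show "k \<in> vars (AndG fs) - {i}" using AndG.IH h by auto
  qed
qed

fun killed :: "nat \<Rightarrow> bool \<Rightarrow> formula \<Rightarrow> nat" where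
  "killed i v (Var j) = 0"
| "killed i v (Neg f) = killed i v f"
| "killed i v (OrG fs) = (if \<exists>f\<in>set fs. isLit f \<and> lvar f = i \<and> lpol f = v then 1 else 0) + sum_list (map (killed i v) fs)"
| "killed i v (AndG fs) = (if \<exists>f\<in>set fs. isLit f \<and> lvar f = i \<and> lpol f \<noteq> v then 1 else 0) + sum_list (map (killed i v) fs)"

lemma restr_gates: "gsize (restr i v F) + killed i v F \<le> gates F"
proof (induction F)
  case (Var j) then show ?case by (simp add: gsize_def)
next
  case (Neg f) then show ?case by (auto simp: gsize_def split: sum.splits)
next
  case (OrG fs)
  have s: "sum_list (map gsize (map (restr i v) fs)) + sum_list (map (killed i v) fs) \<le> sum_list (map gates fs)"
  proof -
    have "sum_list (map gsize (map (restr i v) fs)) + sum_list (map (killed i v) fs)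
       = sum_list (map (\<lambda>f. gsize (restr i v f) + killed i v f) fs)" by (simp add: sum_list_addf o_def)
    also have "\<dots> \<le> sum_list (map gates fs)" by (rule sum_list_mono) (use OrG.IH in auto)
    finally show ?thesis .
  qed
  show ?case
  proof (cases "Inl True \<in> set (map (restr i v) fs)")
    case True
    then show ?thesis using s by (simp add: orres_def gsize_def)
  next
    case False
    have "\<not> (\<exists>f\<in>set fs. isLit f \<and> lvar f = i \<and> lpol f = v)"
    proof
      assume "\<exists>f\<in>set fs. isLit f \<and> lvar f = i \<and> lpol f = v"
      then obtain f where "f \<in> set fs" "restr i v f = Inl True" using restr_lit by force
      then show False using False by force
    qed
    then have k: "killed i v (OrG fs) = sum_list (map (killed i v) fs)" by simp
    have "gsize (orres (map (restr i v) fs)) \<le> 1 + sum_list (map gsize (map (restr i v) fs))"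
      using False by (simp add: orres_def gsize_def rights_sum)
    then show ?thesis using s k by simp
  qed
next
  case (AndG fs)
  have s: "sum_list (map gsize (map (restr i v) fs)) + sum_list (map (killed i v) fs) \<le> sum_list (map gates fs)"
  proof -
    have "sum_list (map gsize (map (restr i v) fs)) + sum_list (map (killed i v) fs)
       = sum_list (map (\<lambda>f. gsize (restr i v f) + killed i v f) fs)" by (simp add: sum_list_addf o_def)
    also have "\<dots> \<le> sum_list (map gates fs)" by (rule sum_list_mono) (use AndG.IH in auto)
    finally show ?thesis .
  qed
  show ?case
  proof (cases "Inl False \<in> set (map (restr i v) fs)")
    case True
    then show ?thesis using s by (simp add: andres_def gsize_def)
  next
    case False
    have "\<not> (\<exists>f\<in>set fs. isLit f \<and> lvar f = i \<and> lpol f \<noteq> v)"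
    proof
      assume "\<exists>f\<in>set fs. isLit f \<and> lvar f = i \<and> lpol f \<noteq> v"
      then obtain f where "f \<in> set fs" "restr i v f = Inl False" using restr_lit by force
      then show False using False by force
    qed
    then have k: "killed i v (AndG fs) = sum_list (map (killed i v) fs)" by simp
    have "gsize (andres (map (restr i v) fs)) \<le> 1 + sum_list (map gsize (map (restr i v) fs))"
      using False by (simp add: andres_def gsize_def rights_sum)
    then show ?thesis using s k by simp
  qed
qed




definition adj :: "(nat \<Rightarrow> bool) \<Rightarrow> (nat \<Rightarrow> bool) \<Rightarrow> bool" where
  "adj a b \<longleftrightarrow> (\<exists>i. b = a(i := \<not> a i))"

definition EE :: "(nat \<Rightarrow> bool) set \<Rightarrow> (nat \<Rightarrow> bool) set \<Rightarrow> ((nat \<Rightarrow> bool) \<times> (nat \<Rightarrow> bool)) set" where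
  "EE A B = {(a,b). a \<in> A \<and> b \<in> B \<and> adj a b}"

definition ee :: "(nat \<Rightarrow> bool) set \<Rightarrow> (nat \<Rightarrow> bool) set \<Rightarrow> nat" where
  "ee A B = card (EE A B)"

lemma adj_sym: assumes "adj a b" shows "adj b a"
proof -
  obtain i where i: "b = a(i := \<not> a i)" using assms unfolding adj_def by blast
  then have "a = b(i := \<not> b i)" by (simp add: fun_eq_iff)
  then show ?thesis unfolding adj_def by blast
qed

lemma ee_sym: "ee A B = ee B A"
proof -
  have "EE B A = (\<lambda>(a,b). (b,a)) ` EE A B"
    unfolding EE_def by (auto intro: adj_sym simp: image_iff)
  moreover have "inj_on (\<lambda>(a,b). (b,a)) (EE A B)" by (auto simp: inj_on_def)
  ultimately show ?thesis unfolding ee_def by (simp add: card_image)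
qed

lemma ee_sum: "finite A \<Longrightarrow> finite B \<Longrightarrow> ee A B = (\<Sum>a\<in>A. card {b\<in>B. adj a b})"
proof -
  assume "finite A" "finite B"
  have "EE A B = Sigma A (\<lambda>a. {b\<in>B. adj a b})" unfolding EE_def by auto
  then show ?thesis unfolding ee_def using \<open>finite A\<close> \<open>finite B\<close> by (simp add: card_SigmaI)
qed

lemma ee_split: "finite A1 \<Longrightarrow> finite A2 \<Longrightarrow> finite B \<Longrightarrow> A1 \<inter> A2 = {} \<Longrightarrow>
   ee (A1 \<union> A2) B = ee A1 B + ee A2 B"
  by (simp add: ee_sum sum.union_disjoint)

lemma combine_real:
  fixes e1 e2 p q X Y :: real
  assumes "e1 \<ge> 0" "e2 \<ge> 0" "e1^2 \<le> p" "e2^2 \<le> q" "X \<ge> 0" "Y \<ge> 0" "p*q \<le> X*Y"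
  shows "(e1+e2)^2 \<le> p + q + X + Y"
proof -
  have p0: "p \<ge> 0" using assms(3) by (meson order_trans zero_le_power2)
  have "(e1*e2)^2 = e1^2 * e2^2" by (simp add: power_mult_distrib)
  also have "\<dots> \<le> p * q" using assms(3,4) p0 by (intro mult_mono) auto
  also have "\<dots> \<le> X * Y" by (rule assms(7))
  also have "\<dots> \<le> ((X+Y)/2)^2"
  proof -
    have "((X+Y)/2)^2 - X*Y = ((X-Y)/2)^2" by (simp add: power2_eq_square field_simps)
    moreover have "((X-Y)/2)^2 \<ge> 0" by simp
    ultimately show ?thesis by linarith
  qed
  finally have "(e1*e2)^2 \<le> ((X+Y)/2)^2" .
  then have "e1*e2 \<le> (X+Y)/2" by (rule power2_le_imp_le) (use assms in simp)
  then have m: "2*(e1*e2) \<le> X + Y" by simp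
  have "(e1+e2)^2 = e1^2 + e2^2 + 2*(e1*e2)" by (simp add: power2_eq_square algebra_simps)
  also have "\<dots> \<le> p + q + (X + Y)" using assms(3,4) m by (intro add_mono) auto
  finally show ?thesis by (simp add: algebra_simps)
qed

lemma combine_ineq:
  fixes e1 e2 a1 a2 b c1 c2 :: nat
  assumes "e1^2 \<le> a1*b*c1" "e2^2 \<le> a2*b*c2"
  shows "(e1+e2)^2 \<le> (a1+a2)*b*(c1+c2)"
proof -
  have h1: "(real e1)^2 \<le> real a1 * real b * real c1" using assms(1) by (metis of_nat_le_iff of_nat_mult of_nat_power)
  have h2: "(real e2)^2 \<le> real a2 * real b * real c2" using assms(2) by (metis of_nat_le_iff of_nat_mult of_nat_power)
  have "(real e1 + real e2)^2 \<le> real a1 * real b * real c1 + real a2 * real b * real c2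
        + real a1 * real b * real c2 + real a2 * real b * real c1"
    by (rule combine_real[OF _ _ h1 h2]) (auto simp: algebra_simps)
  also have "\<dots> = real ((a1+a2)*b*(c1+c2))" by (simp add: algebra_simps)
  finally have "real ((e1+e2)^2) \<le> real ((a1+a2)*b*(c1+c2))" by simp
  then show ?thesis by linarith
qed

definition litvars :: "formula list \<Rightarrow> nat set" where
  "litvars fs = lvar ` {f \<in> set fs. isLit f}"

fun lcost :: "formula \<Rightarrow> nat" where
  "lcost (Var i) = 0"
| "lcost (Neg f) = lcost f"
| "lcost (OrG fs) = card (litvars fs) + sum_list (map lcost fs)"
| "lcost (AndG fs) = card (litvars fs) + sum_list (map lcost fs)"

definition kcost :: "formula \<Rightarrow> nat" where
  "kcost F = lcost F + (if isLit F then 1 else 0)"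

lemma lcost_lit: "isLit f \<Longrightarrow> lcost f = 0"
  by (induction f) auto

lemma litgroup:
  assumes fin: "finite A" "finite B"
    and hA: "\<forall>a\<in>A. \<exists>l\<in>set gs. isLit l \<and> eval a l"
    and hB: "\<forall>b\<in>B. \<forall>l\<in>set gs. \<not> eval b l"
  shows "(ee A B)^2 \<le> card A * card B * card (litvars gs)"
proof -
  have e1: "ee A B \<le> card A"
  proof -
    have "ee A B = (\<Sum>a\<in>A. card {b\<in>B. adj a b})" using fin by (rule ee_sum)
    also have "\<dots> \<le> (\<Sum>a\<in>A. 1)"
    proof (rule sum_mono)
      fix a assume a: "a \<in> A"
      then obtain l where l: "l \<in> set gs" "isLit l" "eval a l" using hA by auto
      have "{b\<in>B. adj a b} \<subseteq> {a(lvar l := \<not> a (lvar l))}"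
      proof
        fix b assume b: "b \<in> {b\<in>B. adj a b}"
        then obtain i where i: "b = a(i := \<not> a i)" unfolding adj_def by auto
        have "\<not> eval b l" using b hB l by auto
        then have "i = lvar l" using l i eval_lit[of l] by (auto split: if_splits)
        then show "b \<in> {a(lvar l := \<not> a (lvar l))}" using i by simp
      qed
      then have "card {b\<in>B. adj a b} \<le> card {a(lvar l := \<not> a (lvar l))}" by (intro card_mono) auto
      then show "card {b\<in>B. adj a b} \<le> 1" by simp
    qed
    finally show ?thesis by simp
  qed
  have e2: "ee A B \<le> card (litvars gs) * card B"
  proof -
    have "ee A B = ee B A" by (rule ee_sym)
    also have "\<dots> = (\<Sum>b\<in>B. card {a\<in>A. adj b a})" using fin by (simp add: ee_sum)
    also have "\<dots> \<le> (\<Sum>b\<in>B. card (litvars gs))"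
    proof (rule sum_mono)
      fix b assume b: "b \<in> B"
      have "{a\<in>A. adj b a} \<subseteq> (\<lambda>j. b(j := \<not> b j)) ` litvars gs"
      proof
        fix a assume a: "a \<in> {a\<in>A. adj b a}"
        then obtain i where i: "a = b(i := \<not> b i)" unfolding adj_def by auto
        obtain l where l: "l \<in> set gs" "isLit l" "eval a l" using hA a by auto
        have "\<not> eval b l" using b hB l by auto
        then have "i = lvar l" using l i eval_lit[of l] by (auto split: if_splits)
        then show "a \<in> (\<lambda>j. b(j := \<not> b j)) ` litvars gs" using i l unfolding litvars_def by auto
      qed
      have fl: "finite (litvars gs)" unfolding litvars_def by simp
      have "card {a\<in>A. adj b a} \<le> card ((\<lambda>j. b(j := \<not> b j)) ` litvars gs)"
        using fl \<open>{a\<in>A. adj b a} \<subseteq> _\<close> by (intro card_mono) auto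
      also have "\<dots> \<le> card (litvars gs)" using fl by (rule card_image_le)
      finally show "card {a\<in>A. adj b a} \<le> card (litvars gs)" .
    qed
    finally show ?thesis by (simp add: mult.commute)
  qed
  have "(ee A B)^2 = ee A B * ee A B" by (simp add: power2_eq_square)
  also have "\<dots> \<le> card A * (card (litvars gs) * card B)" using e1 e2 by (rule mult_mono) auto
  finally show ?thesis by (simp add: algebra_simps)
qed

lemma nonlit_lemma:
  assumes H: "\<forall>g\<in>set gs. \<forall>A B. finite A \<longrightarrow> finite B \<longrightarrow> (\<forall>a\<in>A. eval a g) \<longrightarrow> (\<forall>b\<in>B. \<not> eval b g)
               \<longrightarrow> (ee A B)^2 \<le> card A * card B * kcost g"
  shows "finite A \<Longrightarrow> finite B \<Longrightarrow> \<forall>a\<in>A. \<exists>g\<in>set gs. \<not> isLit g \<and> eval a g \<Longrightarrow>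
    \<forall>b\<in>B. \<forall>g\<in>set gs. \<not> eval b g \<Longrightarrow> (ee A B)^2 \<le> card A * card B * sum_list (map lcost gs)"
  using H
proof (induction gs arbitrary: A)
  case Nil
  then have "A = {}" by auto
  then show ?case by (simp add: ee_def EE_def)
next
  case (Cons g gs)
  show ?case
  proof (cases "isLit g")
    case True
    then have "(ee A B)^2 \<le> card A * card B * sum_list (map lcost gs)"
      using Cons.IH Cons.prems by auto
    then show ?thesis using True lcost_lit by simp
  next
    case False
    define A1 where "A1 = {a\<in>A. eval a g}"
    define A2 where "A2 = A - A1"
    have fin: "finite A1" "finite A2" using Cons.prems(1) unfolding A1_def A2_def by auto
    have "A = A1 \<union> A2" "A1 \<inter> A2 = {}" unfolding A1_def A2_def by auto
    then have eq: "ee A B = ee A1 B + ee A2 B" "card A = card A1 + card A2"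
      using ee_split fin Cons.prems(2) card_Un_disjoint by metis+
    have b1: "(ee A1 B)^2 \<le> card A1 * card B * lcost g"
      using Cons.prems fin False unfolding A1_def kcost_def by auto
    have b2: "(ee A2 B)^2 \<le> card A2 * card B * sum_list (map lcost gs)"
      using Cons.IH[of A2] Cons.prems fin unfolding A2_def A1_def by auto
    show ?thesis using combine_ineq[OF b1 b2] eq by simp
  qed
qed

lemma or_lemma:
  assumes H: "\<forall>g\<in>set gs. \<forall>A B. finite A \<longrightarrow> finite B \<longrightarrow> (\<forall>a\<in>A. eval a g) \<longrightarrow> (\<forall>b\<in>B. \<not> eval b g)
               \<longrightarrow> (ee A B)^2 \<le> card A * card B * kcost g"
  and fA: "finite A" and fB: "finite B"
  and hA: "\<forall>a\<in>A. \<exists>g\<in>set gs. eval a g"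
  and hB: "\<forall>b\<in>B. \<forall>g\<in>set gs. \<not> eval b g"
  shows "(ee A B)^2 \<le> card A * card B * (card (litvars gs) + sum_list (map lcost gs))"
proof -
  define A1 where "A1 = {a\<in>A. \<exists>l\<in>set gs. isLit l \<and> eval a l}"
  define A2 where "A2 = A - A1"
  have fin: "finite A1" "finite A2" using fA unfolding A1_def A2_def by auto
  have "A = A1 \<union> A2" "A1 \<inter> A2 = {}" unfolding A1_def A2_def by auto
  then have eq: "ee A B = ee A1 B + ee A2 B" "card A = card A1 + card A2"
    using ee_split fin fB card_Un_disjoint by metis+
  have b1: "(ee A1 B)^2 \<le> card A1 * card B * card (litvars gs)"
    using litgroup[OF fin(1) fB _ hB] unfolding A1_def by auto
  have b2: "(ee A2 B)^2 \<le> card A2 * card B * sum_list (map lcost gs)"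
    using nonlit_lemma[OF H fin(2) fB _ hB] hA unfolding A2_def A1_def by blast
  show ?thesis using combine_ineq[OF b1 b2] eq by simp
qed

lemma litvars_neg: "litvars (map Neg fs) = litvars fs"
proof -
  have "{f \<in> set (map Neg fs). isLit f} = Neg ` {f\<in>set fs. isLit f}" by auto
  then show ?thesis unfolding litvars_def by (simp add: image_image)
qed

lemma litvars_var: "litvars [Var i] = {i}"
  unfolding litvars_def by auto

lemma khr: "finite A \<Longrightarrow> finite B \<Longrightarrow> \<forall>a\<in>A. eval a F \<Longrightarrow> \<forall>b\<in>B. \<not> eval b F \<Longrightarrow>
   (ee A B)^2 \<le> card A * card B * kcost F"
proof (induction F arbitrary: A B)
  case (Var i)
  have "(ee A B)^2 \<le> card A * card B * card (litvars [Var i])"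
    by (rule litgroup) (use Var.prems in auto)
  then show ?case by (simp add: litvars_var kcost_def)
next
  case (Neg f)
  have "(ee B A)^2 \<le> card B * card A * kcost f" using Neg by auto
  then show ?case by (simp add: ee_sym[of B A] kcost_def algebra_simps)
next
  case (OrG fs)
  have "(ee A B)^2 \<le> card A * card B * (card (litvars fs) + sum_list (map lcost fs))"
    by (rule or_lemma) (use OrG in auto)
  then show ?case by (simp add: kcost_def)
next
  case (AndG fs)
  have H: "\<forall>g\<in>set (map Neg fs). \<forall>A B. finite A \<longrightarrow> finite B \<longrightarrow> (\<forall>a\<in>A. eval a g) \<longrightarrow> (\<forall>b\<in>B. \<not> eval b g)
               \<longrightarrow> (ee A B)^2 \<le> card A * card B * kcost g"
  proof (intro ballI allI impI)
    fix g A B assume g: "g \<in> set (map Neg fs)" and p: "finite A" "finite B" "\<forall>a\<in>A. eval a g" "\<forall>b\<in>B. \<not> eval b g"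
    then obtain f where f: "f \<in> set fs" "g = Neg f" by auto
    have "(ee B A)^2 \<le> card B * card A * kcost f" using AndG.IH[OF f(1)] p f by auto
    then show "(ee A B)^2 \<le> card A * card B * kcost g" using f by (simp add: ee_sym[of B A] kcost_def algebra_simps)
  qed
  have "(ee B A)^2 \<le> card B * card A * (card (litvars (map Neg fs)) + sum_list (map lcost (map Neg fs)))"
    by (rule or_lemma[OF H]) (use AndG.prems in auto)
  then show ?case by (simp add: kcost_def litvars_neg ee_sym[of B A] o_def algebra_simps)
qed

lemma khr_deg:
  assumes "finite A" "finite B" "A \<noteq> {}" "B \<noteq> {}" "\<forall>a\<in>A. eval a F" "\<forall>b\<in>B. \<not> eval b F"
    "\<forall>a\<in>A. dA \<le> card {b\<in>B. adj a b}" "\<forall>b\<in>B. dB \<le> card {a\<in>A. adj b a}"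
  shows "dA * dB \<le> kcost F"
proof -
  have k: "(ee A B)^2 \<le> card A * card B * kcost F" using khr assms by blast
  have l1: "dA * card A \<le> ee A B"
  proof -
    have "dA * card A = (\<Sum>a\<in>A. dA)" by simp
    also have "\<dots> \<le> (\<Sum>a\<in>A. card {b\<in>B. adj a b})" using assms(7) by (intro sum_mono) auto
    finally show ?thesis using ee_sum assms(1,2) by simp
  qed
  have l2: "dB * card B \<le> ee A B"
  proof -
    have "dB * card B = (\<Sum>b\<in>B. dB)" by simp
    also have "\<dots> \<le> (\<Sum>b\<in>B. card {a\<in>A. adj b a})" using assms(8) by (intro sum_mono) auto
    finally show ?thesis using ee_sum assms(1,2) ee_sym by metis
  qed
  have "(card A * card B) * (dA * dB) = (dA * card A) * (dB * card B)" by (simp add: algebra_simps)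
  also have "\<dots> \<le> ee A B * ee A B" using l1 l2 by (rule mult_mono) auto
  also have "\<dots> \<le> (card A * card B) * kcost F" using k by (simp add: power2_eq_square algebra_simps)
  finally have "(card A * card B) * (dA * dB) \<le> (card A * card B) * kcost F" .
  moreover have "card A * card B > 0" using assms(1-4) by (simp add: card_gt_0_iff)
  ultimately show ?thesis by simp
qed




definition K :: "nat \<Rightarrow> formula \<Rightarrow> nat" where
  "K i F = killed i True F + killed i False F"

lemma K_eq: "K i = (\<lambda>f. killed i True f + killed i False f)"
  by (rule ext) (simp add: K_def)

lemma sum_swap_list: "(\<Sum>i\<in>V. sum_list (map (g i) fs)) = sum_list (map (\<lambda>f. \<Sum>i\<in>V. g i f) fs)"
  by (induction fs) (auto simp: sum.distrib)

lemma card_le_ind: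
  assumes "finite V" "S \<subseteq> V" "\<forall>i\<in>S. 1 \<le> h i"
  shows "card S \<le> (\<Sum>i\<in>V. h i)"
proof -
  have "card S = (\<Sum>i\<in>S. (1::nat))" by simp
  also have "\<dots> \<le> (\<Sum>i\<in>S. h i)" using assms(3) by (intro sum_mono) auto
  also have "\<dots> \<le> (\<Sum>i\<in>V. h i)" using assms(1,2) by (intro sum_mono2) auto
  finally show ?thesis .
qed

lemma litvars_sub: "vars (OrG fs) \<subseteq> V \<Longrightarrow> litvars fs \<subseteq> V"
  unfolding litvars_def using lvar_vars by fastforce

lemma gate_step:
  assumes fin: "finite V"
    and sub: "litvars fs \<subseteq> V"
    and IH: "\<forall>f\<in>set fs. lcost f \<le> (\<Sum>i\<in>V. K i f)"
    and ind: "\<forall>i\<in>litvars fs. 1 \<le> h i"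
    and eq: "\<forall>i. K i G = h i + sum_list (map (K i) fs)"
  shows "card (litvars fs) + sum_list (map lcost fs) \<le> (\<Sum>i\<in>V. K i G)"
proof -
  have "sum_list (map lcost fs) \<le> sum_list (map (\<lambda>f. \<Sum>i\<in>V. K i f) fs)"
    using IH by (intro sum_list_mono) auto
  also have "\<dots> = (\<Sum>i\<in>V. sum_list (map (K i) fs))" by (rule sum_swap_list[symmetric])
  finally have a: "sum_list (map lcost fs) \<le> (\<Sum>i\<in>V. sum_list (map (K i) fs))" .
  have b: "card (litvars fs) \<le> (\<Sum>i\<in>V. h i)" using card_le_ind[OF fin sub ind] .
  have "(\<Sum>i\<in>V. K i G) = (\<Sum>i\<in>V. h i) + (\<Sum>i\<in>V. sum_list (map (K i) fs))"
    using eq by (simp add: sum.distrib)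
  then show ?thesis using a b by linarith
qed

lemma lcost_killed: "finite V \<Longrightarrow> vars F \<subseteq> V \<Longrightarrow> lcost F \<le> (\<Sum>i\<in>V. K i F)"
proof (induction F)
  case (Var j) then show ?case by simp
next
  case (Neg f) then show ?case by (simp add: K_def)
next
  case (OrG fs)
  define h where "h i = (if \<exists>f\<in>set fs. isLit f \<and> lvar f = i \<and> lpol f = True then 1 else 0)
      + (if \<exists>f\<in>set fs. isLit f \<and> lvar f = i \<and> lpol f = False then 1 else (0::nat))" for i
  have "card (litvars fs) + sum_list (map lcost fs) \<le> (\<Sum>i\<in>V. K i (OrG fs))"
  proof (rule gate_step[OF OrG.prems(1), where h = h])
    show "litvars fs \<subseteq> V" using OrG.prems(2) by (rule litvars_sub)
    show "\<forall>f\<in>set fs. lcost f \<le> (\<Sum>i\<in>V. K i f)" using OrG by auto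
    show "\<forall>i\<in>litvars fs. 1 \<le> h i"
    proof
      fix i assume "i \<in> litvars fs"
      then obtain f where "f \<in> set fs" "isLit f" "lvar f = i" unfolding litvars_def by auto
      then show "1 \<le> h i" unfolding h_def by (cases "lpol f") auto
    qed
    show "\<forall>i. K i (OrG fs) = h i + sum_list (map (K i) fs)"
      by (auto simp: K_def h_def K_eq sum_list_addf)
  qed
  then show ?case by simp
next
  case (AndG fs)
  define h where "h i = (if \<exists>f\<in>set fs. isLit f \<and> lvar f = i \<and> lpol f \<noteq> True then 1 else 0)
      + (if \<exists>f\<in>set fs. isLit f \<and> lvar f = i \<and> lpol f \<noteq> False then 1 else (0::nat))" for i
  have "card (litvars fs) + sum_list (map lcost fs) \<le> (\<Sum>i\<in>V. K i (AndG fs))"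
  proof (rule gate_step[OF AndG.prems(1), where h = h])
    show "litvars fs \<subseteq> V" using AndG.prems(2) litvars_sub[of fs V] by simp
    show "\<forall>f\<in>set fs. lcost f \<le> (\<Sum>i\<in>V. K i f)" using AndG by auto
    show "\<forall>i\<in>litvars fs. 1 \<le> h i"
    proof
      fix i assume "i \<in> litvars fs"
      then obtain f where "f \<in> set fs" "isLit f" "lvar f = i" unfolding litvars_def by auto
      then show "1 \<le> h i" unfolding h_def by (cases "lpol f") auto
    qed
    show "\<forall>i. K i (AndG fs) = h i + sum_list (map (K i) fs)"
      by (auto simp: K_def h_def K_eq sum_list_addf)
  qed
  then show ?case by simp
qed

lemma pick:
  assumes "finite V" "V \<noteq> {}"
  shows "\<exists>i\<in>V. \<exists>v. (\<Sum>j\<in>V. K j F) \<le> 2 * card V * killed i v F"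
proof -
  obtain i where i: "i \<in> V" "K i F = Max ((\<lambda>j. K j F) ` V)"
    using Max_in[of "(\<lambda>j. K j F) ` V"] assms by (metis (no_types, lifting) empty_is_image finite_imageI imageE)
  have "\<forall>j\<in>V. K j F \<le> K i F" using i(2) assms(1) by simp
  then have "(\<Sum>j\<in>V. K j F) \<le> card V * K i F"
    using sum_bounded_above[of V "\<lambda>j. K j F" "K i F"] by simp
  moreover obtain v where "K i F \<le> 2 * killed i v F"
  proof (cases "killed i True F \<le> killed i False F")
    case True
    then have "K i F \<le> 2 * killed i False F" unfolding K_def by simp
    then show ?thesis using that by blast
  next
    case False
    then have "K i F \<le> 2 * killed i True F" unfolding K_def by simp
    then show ?thesis using that by blast
  qed
  ultimately have "(\<Sum>j\<in>V. K j F) \<le> card V * (2 * killed i v F)"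
    by (meson le_trans mult_le_mono2)
  then show ?thesis using i(1) by (auto simp: algebra_simps)
qed




definition wt :: "nat set \<Rightarrow> (nat \<Rightarrow> bool) \<Rightarrow> nat" where
  "wt V x = card {k\<in>V. x k}"

definition supp :: "nat set \<Rightarrow> (nat \<Rightarrow> bool) set" where
  "supp V = {x. \<forall>k. k \<notin> V \<longrightarrow> \<not> x k}"

lemma finite_supp: "finite V \<Longrightarrow> finite (supp V)"
proof -
  assume "finite V"
  have "supp V \<subseteq> (\<lambda>S k. k \<in> S) ` Pow V"
  proof
    fix x assume "x \<in> supp V"
    then have "x = (\<lambda>k. k \<in> {k\<in>V. x k})" unfolding supp_def by auto
    then show "x \<in> (\<lambda>S k. k \<in> S) ` Pow V" by blast
  qed
  then show ?thesis by (rule finite_subset) (simp add: \<open>finite V\<close>)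
qed

lemma supp_upd: "x \<in> supp V \<Longrightarrow> i \<in> V \<Longrightarrow> x(i:=b) \<in> supp V"
  unfolding supp_def by auto

lemma wt_upd:
  assumes "finite V" "i \<in> V"
  shows "wt V (x(i:=b)) = (if b then (if x i then wt V x else Suc (wt V x)) else (if x i then wt V x - 1 else wt V x))"
proof -
  have "{k\<in>V. (x(i:=b)) k} = (if b then insert i {k\<in>V. x k} else {k\<in>V. x k} - {i})"
    using assms(2) by auto
  then show ?thesis unfolding wt_def using assms by (auto simp: card_insert_if)
qed

lemma wt_pos: assumes "finite V" "i \<in> V" "x i" shows "wt V x \<ge> 1"
proof -
  have "{k\<in>V. x k} \<noteq> {}" "finite {k\<in>V. x k}" using assms by auto
  then have "card {k\<in>V. x k} > 0" by (simp add: card_gt_0_iff)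
  then show ?thesis unfolding wt_def by simp
qed

lemma wt_pair:
  assumes "finite V" "i \<in> V" "j \<in> V" "i \<noteq> j"
  shows "wt V (x(j:=\<not>v, i:=v)) = Suc (wt (V - {i,j}) x)"
proof -
  have "{k\<in>V. (x(j:=\<not>v, i:=v)) k} = insert (if v then i else j) {k\<in>V - {i,j}. x k}"
    using assms by auto
  then show ?thesis unfolding wt_def using assms by (simp add: card_insert_if)
qed

lemma inj_flip: "inj_on (\<lambda>i. a(i := \<not> a i)) S"
proof (rule inj_onI)
  fix i j assume "a(i := \<not> a i) = a(j := \<not> a j)"
  then have "(a(i := \<not> a i)) i = (a(j := \<not> a j)) i" by simp
  then show "i = j" by (cases "i = j") auto
qed

lemma inj_set: "inj_on (\<lambda>i. a(i := c)) {i\<in>V. a i \<noteq> c}"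
proof (rule inj_onI)
  fix i j assume "i \<in> {i\<in>V. a i \<noteq> c}" "a(i := c) = a(j := c)"
  then have "(a(i := c)) i = (a(j := c)) i" "a i \<noteq> c" by auto
  then show "i = j" by (cases "i = j") auto
qed

lemma adj_flip: "adj a (a(i := \<not> a i))"
  unfolding adj_def by blast

lemma kcost_const: "kcost (AndG []) = 0" "kcost (OrG []) = 0"
  by (simp_all add: kcost_def litvars_def)

lemma kh_parity:
  assumes fin: "finite V" and m: "card V \<ge> 1" and ev: "\<forall>x. eval x F = odd (wt V x)"
  shows "(card V)^2 \<le> 4 * kcost F"
proof -
  define A where "A = {x\<in>supp V. odd (wt V x)}"
  define B where "B = {x\<in>supp V. even (wt V x)}"
  have fA: "finite A" and fB: "finite B" using finite_supp[OF fin] unfolding A_def B_def by auto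
  have "V \<noteq> {}" using m by auto
  then obtain i0 where i0: "i0 \<in> V" by blast
  have "(\<lambda>k. k = i0) \<in> A"
  proof -
    have "{k\<in>V. k = i0} = {i0}" using i0 by auto
    then show ?thesis unfolding A_def supp_def wt_def using i0 by auto
  qed
  then have nA: "A \<noteq> {}" by auto
  have "(\<lambda>k. False) \<in> B" unfolding B_def supp_def wt_def by auto
  then have nB: "B \<noteq> {}" by auto
  have dA: "\<forall>a\<in>A. card V \<le> card {b\<in>B. adj a b}"
  proof
    fix a assume a: "a \<in> A"
    have "(\<lambda>i. a(i := \<not> a i)) ` V \<subseteq> {b\<in>B. adj a b}"
    proof
      fix b assume "b \<in> (\<lambda>i. a(i := \<not> a i)) ` V"
      then obtain i where i: "i \<in> V" "b = a(i := \<not> a i)" by auto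
      have "even (wt V b)"
        using a i wt_upd[OF fin i(1), of a "\<not> a i"] wt_pos[OF fin i(1), of a] unfolding A_def
        by (cases "a i") (auto simp: odd_pos)
      then show "b \<in> {b\<in>B. adj a b}" using a i supp_upd adj_flip unfolding A_def B_def by auto
    qed
    then have "card ((\<lambda>i. a(i := \<not> a i)) ` V) \<le> card {b\<in>B. adj a b}" using fB by (intro card_mono) auto
    then show "card V \<le> card {b\<in>B. adj a b}" using card_image[OF inj_flip] by metis
  qed
  have dB: "\<forall>b\<in>B. card V \<le> card {a\<in>A. adj b a}"
  proof
    fix a assume a: "a \<in> B"
    have "(\<lambda>i. a(i := \<not> a i)) ` V \<subseteq> {b\<in>A. adj a b}"
    proof
      fix b assume "b \<in> (\<lambda>i. a(i := \<not> a i)) ` V"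
      then obtain i where i: "i \<in> V" "b = a(i := \<not> a i)" by auto
      have "odd (wt V b)"
        using a i wt_upd[OF fin i(1), of a "\<not> a i"] wt_pos[OF fin i(1), of a] unfolding B_def
        by (cases "a i") auto
      then show "b \<in> {b\<in>A. adj a b}" using a i supp_upd adj_flip unfolding A_def B_def by auto
    qed
    then have "card ((\<lambda>i. a(i := \<not> a i)) ` V) \<le> card {b\<in>A. adj a b}" using fA by (intro card_mono) auto
    then show "card V \<le> card {b\<in>A. adj a b}" using card_image[OF inj_flip] by metis
  qed
  have "card V * card V \<le> kcost F"
    by (rule khr_deg[OF fA fB nA nB _ _ dA dB]) (use ev in \<open>auto simp: A_def B_def\<close>)
  then show ?thesis by (simp add: power2_eq_square)
qed




lemma maj_arith: "(m::nat)^2 \<le> 4 * ((m div 2 + 1) * (m - m div 2))"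
proof -
  obtain q r where qr: "m = 2*q + r" "r < 2" "q = m div 2" by (metis mod_less_divisor mult_div_mod_eq zero_less_numeral)
  show ?thesis
  proof (cases "r = 0")
    case True
    then have "m = 2*q" "m div 2 = q" using qr by auto
    then show ?thesis by (simp add: power2_eq_square algebra_simps)
  next
    case False
    then have "r = 1" using qr by auto
    then have "m = 2*q+1" "m div 2 = q" using qr by auto
    then show ?thesis by (simp add: power2_eq_square algebra_simps)
  qed
qed

lemma exists_wt:
  assumes "finite V" "w \<le> card V"
  shows "\<exists>x\<in>supp V. wt V x = w"
proof -
  obtain S where S: "S \<subseteq> V" "card S = w" using assms obtain_subset_with_card_n by metis
  have "{k\<in>V. k \<in> S} = S" using S by auto
  then have "wt V (\<lambda>k. k \<in> S) = w" using S unfolding wt_def by simp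
  moreover have "(\<lambda>k. k \<in> S) \<in> supp V" using S unfolding supp_def by auto
  ultimately show ?thesis by blast
qed

lemma kh_maj:
  assumes fin: "finite V" and m: "card V \<ge> 1" and ev: "\<forall>x. eval x F = (2 * wt V x > card V)"
  shows "(card V)^2 \<le> 4 * kcost F"
proof -
  define m where "m = card V"
  define t where "t = m div 2 + 1"
  have tm: "t \<le> m" "t \<ge> 1" using m unfolding t_def m_def by auto
  define A where "A = {x\<in>supp V. wt V x = t}"
  define B where "B = {x\<in>supp V. wt V x = t - 1}"
  have fA: "finite A" and fB: "finite B" using finite_supp[OF fin] unfolding A_def B_def by auto
  have nA: "A \<noteq> {}" using exists_wt[OF fin, of t] tm unfolding A_def m_def by auto
  have "t - 1 \<le> card V" using tm unfolding m_def by simp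
  then obtain xb where "xb \<in> supp V" "wt V xb = t - 1" using exists_wt[OF fin] by blast
  then have nB: "B \<noteq> {}" unfolding B_def by auto
  have dA: "\<forall>a\<in>A. t \<le> card {b\<in>B. adj a b}"
  proof
    fix a assume a: "a \<in> A"
    have "(\<lambda>i. a(i := False)) ` {i\<in>V. a i \<noteq> False} \<subseteq> {b\<in>B. adj a b}"
    proof
      fix b assume "b \<in> (\<lambda>i. a(i := False)) ` {i\<in>V. a i \<noteq> False}"
      then obtain i where i: "i \<in> V" "a i" "b = a(i := False)" by auto
      then have "b = a(i := \<not> a i)" by simp
      then have ad: "adj a b" using adj_flip[of a i] by simp
      moreover have "wt V b = t - 1" using a i wt_upd[OF fin i(1), of a False] unfolding A_def by simp
      ultimately show "b \<in> {b\<in>B. adj a b}" using a i supp_upd unfolding A_def B_def by auto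
    qed
    then have "card ((\<lambda>i. a(i := False)) ` {i\<in>V. a i \<noteq> False}) \<le> card {b\<in>B. adj a b}"
      using fB by (intro card_mono) auto
    moreover have "card ((\<lambda>i. a(i := False)) ` {i\<in>V. a i \<noteq> False}) = t"
    proof -
      have "card ((\<lambda>i. a(i := False)) ` {i\<in>V. a i \<noteq> False}) = card {i\<in>V. a i \<noteq> False}"
        by (rule card_image[OF inj_set])
      also have "\<dots> = t" using a unfolding A_def wt_def by simp
      finally show ?thesis .
    qed
    ultimately show "t \<le> card {b\<in>B. adj a b}" by simp
  qed
  have dB: "\<forall>b\<in>B. (m - (t - 1)) \<le> card {a\<in>A. adj b a}"
  proof
    fix a assume a: "a \<in> B"
    have "(\<lambda>i. a(i := True)) ` {i\<in>V. a i \<noteq> True} \<subseteq> {b\<in>A. adj a b}"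
    proof
      fix b assume "b \<in> (\<lambda>i. a(i := True)) ` {i\<in>V. a i \<noteq> True}"
      then obtain i where i: "i \<in> V" "\<not> a i" "b = a(i := True)" by auto
      then have "b = a(i := \<not> a i)" by simp
      then have ad: "adj a b" using adj_flip[of a i] by simp
      moreover have "wt V b = t" using a i tm wt_upd[OF fin i(1), of a True] unfolding B_def by simp
      ultimately show "b \<in> {b\<in>A. adj a b}" using a i supp_upd unfolding A_def B_def by auto
    qed
    then have "card ((\<lambda>i. a(i := True)) ` {i\<in>V. a i \<noteq> True}) \<le> card {b\<in>A. adj a b}"
      using fA by (intro card_mono) auto
    moreover have "card ((\<lambda>i. a(i := True)) ` {i\<in>V. a i \<noteq> True}) = m - (t - 1)"
    proof -
      have "card ((\<lambda>i. a(i := True)) ` {i\<in>V. a i \<noteq> True}) = card {i\<in>V. a i \<noteq> True}"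
        by (rule card_image[OF inj_set])
      also have "\<dots> = m - (t - 1)"
      proof -
        have "{i\<in>V. a i \<noteq> True} = V - {k\<in>V. a k}" by auto
        moreover have "card (V - {k\<in>V. a k}) = m - card {k\<in>V. a k}"
          unfolding m_def by (rule card_Diff_subset) (use fin in auto)
        moreover have "card {k\<in>V. a k} = t - 1" using a unfolding B_def wt_def by simp
        ultimately show ?thesis by simp
      qed
      finally show ?thesis .
    qed
    ultimately show "m - (t - 1) \<le> card {b\<in>A. adj a b}" by simp
  qed
  have evA: "\<forall>a\<in>A. eval a F" using ev unfolding A_def t_def m_def by auto
  have evB: "\<forall>b\<in>B. \<not> eval b F" using ev unfolding B_def t_def m_def by auto
  have "t * (m - (t - 1)) \<le> kcost F"
    by (rule khr_deg[OF fA fB nA nB evA evB dA dB])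
  moreover have "m - (t - 1) = m - m div 2" unfolding t_def by simp
  ultimately have "(m div 2 + 1) * (m - m div 2) \<le> kcost F" unfolding t_def by simp
  then show ?thesis using maj_arith[of m] unfolding m_def by linarith
qed




lemma final_arith:
  fixes m g g3 k :: nat
  assumes m: "m \<ge> 33"
    and IH: "(m-2)^2 \<le> 32 * g3 + 32 * (m-2)"
    and gk: "g3 + k \<le> g"
    and kc: "m^2 \<le> 4 * (2 * m * k + 1)"
  shows "m^2 \<le> 32 * g + 32 * m"
proof -
  define M where "M = m - 2"
  have M: "m = M + 2" using m unfolding M_def by simp
  have IH': "M^2 \<le> 32 * g3 + 32 * M" using IH M by simp
  have kc': "(M+2)^2 \<le> 8 * (M+2) * k + 4" using kc M by (simp add: algebra_simps)
  have "8 * k + 17 \<ge> M + 2"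
  proof (rule ccontr)
    assume "\<not> 8 * k + 17 \<ge> M + 2"
    then have "8 * k + 18 \<le> M + 2" by simp
    then have "(M+2) * (8*k + 18) \<le> (M+2) * (M+2)" by (rule mult_le_mono2)
    then have "8 * (M+2) * k + 18 * (M+2) \<le> (M+2)^2" by (simp add: power2_eq_square algebra_simps)
    then show False using kc' by simp
  qed
  then have "(M+2)^2 \<le> 32 * (g3 + k) + 32 * (M+2)" using IH' by (simp add: power2_eq_square algebra_simps)
  then show ?thesis using gk M by simp
qed

lemma main_induct:
  fixes Fam :: "nat set \<Rightarrow> ((nat \<Rightarrow> bool) \<Rightarrow> bool) \<Rightarrow> bool"
  assumes clos: "\<And>V f i j v. finite V \<Longrightarrow> Fam V f \<Longrightarrow> i \<in> V \<Longrightarrow> j \<in> V \<Longrightarrow> i \<noteq> j \<Longrightarrow>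
      \<exists>f'. Fam (V - {i,j}) f' \<and> ((\<forall>x. f (x(j:=\<not>v, i:=v)) = f' x) \<or> (\<forall>x. f (x(j:=\<not>v, i:=v)) = (\<not> f' x)))"
    and kh: "\<And>V f F. finite V \<Longrightarrow> Fam V f \<Longrightarrow> card V \<ge> 1 \<Longrightarrow> (\<forall>x. eval x F = f x) \<Longrightarrow> (card V)^2 \<le> 4 * kcost F"
  shows "finite V \<Longrightarrow> Fam V f \<Longrightarrow> vars F \<subseteq> V \<Longrightarrow> (\<forall>x. eval x F = f x) \<Longrightarrow>
     (card V)^2 \<le> 32 * gates F + 32 * card V"
proof (induction "card V" arbitrary: V f F rule: less_induct)
  case less
  note fin = less.prems(1) and fam = less.prems(2) and vs = less.prems(3) and ev = less.prems(4)
  define m where "m = card V"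
  show ?case
  proof (cases "m \<le> 32")
    case True
    then have "m * m \<le> 32 * m" by simp
    also have "\<dots> \<le> 32 * gates F + 32 * m" by simp
    finally have "m^2 \<le> 32 * gates F + 32 * m" by (simp add: power2_eq_square)
    then show ?thesis unfolding m_def .
  next
    case False
    then have m33: "m \<ge> 33" by simp
    then have Vne: "V \<noteq> {}" unfolding m_def by auto
    have k1: "m^2 \<le> 4 * kcost F" using kh[OF fin fam _ ev] m33 unfolding m_def by simp
    have lk: "lcost F \<le> (\<Sum>i\<in>V. K i F)" by (rule lcost_killed[OF fin vs])
    obtain i v where i: "i \<in> V" and iv: "(\<Sum>j\<in>V. K j F) \<le> 2 * m * killed i v F"
      using pick[OF fin Vne, of F] unfolding m_def by blast
    have c1: "card (V - {i}) \<ge> 1" using m33 fin i unfolding m_def by simp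
    have "V - {i} \<noteq> {}"
    proof
      assume "V - {i} = {}"
      then have "card (V - {i}) = 0" by (simp only: card.empty)
      then show False using c1 by simp
    qed
    then obtain j where j: "j \<in> V" "j \<noteq> i" by blast
    obtain f' where fam': "Fam (V - {i,j}) f'"
      and fx: "(\<forall>x. f (x(j:=\<not>v, i:=v)) = f' x) \<or> (\<forall>x. f (x(j:=\<not>v, i:=v)) = (\<not> f' x))"
      using clos[OF fin fam i j(1) j(2)[symmetric], of v] by blast
    have finV': "finite (V - {i,j})" using fin by simp
    have cV': "card (V - {i,j}) = m - 2" unfolding m_def using fin i j by (simp add: card_Diff_subset)
    have noconst: "\<not> (\<forall>x. f (x(j:=\<not>v, i:=v)) = c)" for c
    proof
      assume const: "\<forall>x. f (x(j:=\<not>v, i:=v)) = c"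
      have "\<exists>d. \<forall>x. f' x = d" using fx const by (metis (full_types))
      then obtain d where d: "\<forall>x. f' x = d" by blast
      define C where "C = (if d then AndG [] else OrG [])"
      have "\<forall>x. eval x C = f' x" using d unfolding C_def by simp
      moreover have "kcost C = 0" unfolding C_def using kcost_const by simp
      ultimately have "(card (V - {i,j}))^2 \<le> 0" using kh[OF finV' fam'] cV' m33 by fastforce
      then show False using cV' m33 by simp
    qed
    have evF: "f (x(j:=\<not>v, i:=v)) = eval (x(j:=\<not>v, i:=v)) F" for x using ev by simp
    show ?thesis
    proof (cases "restr i v F")
      case (Inl c)
      have "\<forall>x. f (x(j:=\<not>v, i:=v)) = c"
        using restr_eval[of _ i v F] Inl evF by (simp add: val_def)
      then show ?thesis using noconst by blast
    next
      case (Inr F1)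
      have g1: "gates F1 + killed i v F \<le> gates F" using restr_gates[of i v F] Inr by (simp add: gsize_def)
      have v1: "vars F1 \<subseteq> V - {i}" using restr_vars[OF Inr] vs by auto
      have e1: "eval y F1 = eval (y(i:=v)) F" for y using restr_eval[of y i v F] Inr by (simp add: val_def)
      show ?thesis
      proof (cases "restr j (\<not> v) F1")
        case (Inl c)
        have "\<forall>x. f (x(j:=\<not>v, i:=v)) = c"
          using restr_eval[of _ j "\<not> v" F1] Inl evF e1 by (simp add: val_def)
        then show ?thesis using noconst by blast
      next
        case (Inr F2)
        have g2: "gates F2 \<le> gates F1" using restr_gates[of j "\<not> v" F1] Inr by (simp add: gsize_def)
        have v2: "vars F2 \<subseteq> V - {i,j}" using restr_vars[OF Inr] v1 by auto
        have e2: "eval x F2 = f (x(j:=\<not>v, i:=v))" for x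
          using restr_eval[of x j "\<not> v" F1] Inr e1 evF by (simp add: val_def)
        obtain F3 where F3: "gates F3 = gates F2" "vars F3 \<subseteq> V - {i,j}" "\<forall>x. eval x F3 = f' x"
        proof (cases "\<forall>x. f (x(j:=\<not>v, i:=v)) = f' x")
          case True
          then show ?thesis using that[of F2] v2 e2 by simp
        next
          case False
          then have "\<forall>x. f (x(j:=\<not>v, i:=v)) = (\<not> f' x)" using fx by blast
          then show ?thesis using that[of "Neg F2"] v2 e2 by simp
        qed
        have "card (V - {i,j}) < card V" using cV' m33 unfolding m_def by simp
        then have IH: "(m-2)^2 \<le> 32 * gates F3 + 32 * (m-2)"
          using less.hyps[OF _ finV' fam' F3(2) F3(3)] cV' by simp
        have "kcost F \<le> 2 * m * killed i v F + 1" unfolding kcost_def using lk iv by simp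
        then have kc: "m^2 \<le> 4 * (2 * m * killed i v F + 1)"
          using k1 by (meson le_trans mult_le_mono2)
        have "m^2 \<le> 32 * gates F + 32 * m"
          by (rule final_arith[OF m33 IH _ kc]) (use g1 g2 F3(1) in simp)
        then show ?thesis unfolding m_def .
      qed
    qed
  qed
qed

lemma clos_parity:
  assumes "finite V" "i \<in> V" "j \<in> V" "i \<noteq> j"
  shows "\<forall>x. odd (wt V (x(j:=\<not>v, i:=v))) = (\<not> odd (wt (V - {i,j}) x))"
  using wt_pair[OF assms] by simp

lemma clos_maj:
  assumes "finite V" "i \<in> V" "j \<in> V" "i \<noteq> j"
  shows "\<forall>x. (2 * wt V (x(j:=\<not>v, i:=v)) > card V) = (2 * wt (V - {i,j}) x > card (V - {i,j}))"
proof
  fix x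
  have s: "{i,j} \<subseteq> V" using assms by simp
  have c2: "card {i,j} = 2" using assms(4) by simp
  have "card {i,j} \<le> card V" using s assms(1) by (rule card_mono[rotated])
  moreover have "card (V - {i,j}) = card V - card {i,j}" using s assms(1) by (intro card_Diff_subset) auto
  ultimately have c: "card (V - {i,j}) + 2 = card V" using c2 by simp
  show "(2 * wt V (x(j:=\<not>v, i:=v)) > card V) = (2 * wt (V - {i,j}) x > card (V - {i,j}))"
    unfolding wt_pair[OF assms, of x v] c[symmetric] by simp
qed




lemma to_real:
  fixes n g :: nat
  assumes "n^2 \<le> 32 * g + 32 * n" "n \<ge> 64"
  shows "real g \<ge> (1/64) * real n ^ 2"
proof -
  have "64 * n \<le> n * n" using assms(2) by (rule mult_le_mono1)
  moreover have "n * n \<le> 32 * g + 32 * n" using assms(1) by (simp only: power2_eq_square)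
  ultimately have "n * n \<le> 64 * g" by linarith
  then have "n^2 \<le> 64 * g" by (simp only: power2_eq_square)
  then have "real (n^2) \<le> real (64 * g)" by (simp only: of_nat_le_iff)
  then show ?thesis by simp
qed

lemma par_bound: "computes n (parity n) F \<Longrightarrow> n^2 \<le> 32 * gates F + 32 * n"
proof -
  assume c: "computes n (parity n) F"
  let ?Fam = "\<lambda>V f. f = (\<lambda>x. odd (wt V x))"
  have ev: "\<forall>x. eval x F = odd (wt {..<n} x)"
  proof
    fix x
    have "{k\<in>{..<n}. x k} = {i. i < n \<and> x i}" by auto
    then show "eval x F = odd (wt {..<n} x)" using c unfolding computes_def parity_def wt_def by simp
  qed
  have "(card {..<n})^2 \<le> 32 * gates F + 32 * card {..<n}"
  proof (rule main_induct[where Fam = ?Fam])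
    fix V f i j v assume a: "finite V" "?Fam V f" "i \<in> V" "j \<in> V" "i \<noteq> j"
    show "\<exists>f'. ?Fam (V - {i,j}) f' \<and> ((\<forall>x. f (x(j:=\<not>v, i:=v)) = f' x) \<or> (\<forall>x. f (x(j:=\<not>v, i:=v)) = (\<not> f' x)))"
      using clos_parity[OF a(1) a(3-5), of v] a(2) by auto
  next
    fix V f G assume a: "finite V" "?Fam V f" "card V \<ge> 1" "\<forall>x. eval x G = f x"
    show "(card V)^2 \<le> 4 * kcost G" using kh_parity[OF a(1) a(3)] a(2,4) by simp
  qed (use c ev in \<open>auto simp: computes_def\<close>)
  then show ?thesis by simp
qed

lemma maj_bound: "computes n (majority n) F \<Longrightarrow> n^2 \<le> 32 * gates F + 32 * n"
proof -
  assume c: "computes n (majority n) F"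
  let ?Fam = "\<lambda>V f. f = (\<lambda>x. 2 * wt V x > card V)"
  have ev: "\<forall>x. eval x F = (2 * wt {..<n} x > card {..<n})"
  proof
    fix x
    have "{k\<in>{..<n}. x k} = {i. i < n \<and> x i}" by auto
    then show "eval x F = (2 * wt {..<n} x > card {..<n})" using c unfolding computes_def majority_def wt_def by simp
  qed
  have "(card {..<n})^2 \<le> 32 * gates F + 32 * card {..<n}"
  proof (rule main_induct[where Fam = ?Fam])
    fix V f i j v assume a: "finite V" "?Fam V f" "i \<in> V" "j \<in> V" "i \<noteq> j"
    show "\<exists>f'. ?Fam (V - {i,j}) f' \<and> ((\<forall>x. f (x(j:=\<not>v, i:=v)) = f' x) \<or> (\<forall>x. f (x(j:=\<not>v, i:=v)) = (\<not> f' x)))"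
      using clos_maj[OF a(1) a(3-5), of v] a(2) by auto
  next
    fix V f G assume a: "finite V" "?Fam V f" "card V \<ge> 1" "\<forall>x. eval x G = f x"
    show "(card V)^2 \<le> 4 * kcost G" using kh_maj[OF a(1) a(3)] a(2,4) by simp
  qed (use c ev in \<open>auto simp: computes_def\<close>)
  then show ?thesis by simp
qed

theorem mainTheorem14:
  shows "(\<exists>c::real. c > 0 \<and> (\<exists>N. \<forall>n \<ge> N. \<forall>F.
            computes n (parity n) F \<longrightarrow> real (gates F) \<ge> c * real n ^ 2))
       \<and> (\<exists>c::real. c > 0 \<and> (\<exists>N. \<forall>n \<ge> N. \<forall>F.
            computes n (majority n) F \<longrightarrow> real (gates F) \<ge> c * real n ^ 2))"
proof (intro conjI exI[of _ "1/64"] exI[of _ "64::nat"] allI impI)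
  fix n :: nat and F assume "n \<ge> 64" "computes n (parity n) F"
  then show "real (gates F) \<ge> (1/64) * real n ^ 2" using par_bound to_real by blast
next
  fix n :: nat and F assume "n \<ge> 64" "computes n (majority n) F"
  then show "real (gates F) \<ge> (1/64) * real n ^ 2" using maj_bound to_real by blast
qed simp_all


end
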